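(* Let $\alpha,\beta\in\mathbb{R}$. The sequence $\{k^2+\alpha k+\beta\}_{k=0}^{\infty}$ is a classical multiplier sequence if and only if $\alpha\ge -1$ and $0\le\beta\le\frac14(\alpha+1)^2$.
   Context: A real sequence $\{\gamma_k\}_{k=0}^{\infty}$ is a classical multiplier sequence if for every real polynomial $\sum_{k=0}^n a_kx^k$ having only real zeros, the polynomial $\sum_{k=0}^n a_k\gamma_kx^k$ also has only real zeros. *)

theory Defs
  imports "HOL-Computational_Algebra.Polynomial"
begin

text \<open>A real polynomial has only real zeros. By the standard convention
  (Polya--Schur) the zero polynomial is regarded as having only real zeros.\<close>
definition only_real_zeros :: "real poly \<Rightarrow> bool" where
  "only_real_zeros p \<longleftrightarrow>
     p = 0 \<or> (\<forall>z::complex. poly (map_poly complex_of_real p) z = 0 \<longrightarrow> z \<in> \<real>)"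

definition classical_multiplier_sequence :: "(nat \<Rightarrow> real) \<Rightarrow> bool" where
  "classical_multiplier_sequence \<gamma> \<longleftrightarrow>
     (\<forall>p::real poly. only_real_zeros p \<longrightarrow>
        only_real_zeros (Abs_poly (\<lambda>k. \<gamma> k * coeff p k)))"

end

theory Submission
  imports Defs "HOL-Computational_Algebra.Fundamental_Theorem_Algebra"
begin

definition Dform :: "'a::idom \<Rightarrow> 'a \<Rightarrow> 'a poly \<Rightarrow> 'a poly" where
 "Dform c d q = monom 1 2 * pderiv (pderiv q) + smult c (monom 1 1 * pderiv q) + smult d q"

lemma coeff_Dform:
  "coeff (Dform c d q) j = (of_nat j ^ 2 + (c - 1) * of_nat j + d) * coeff q j"
proof (cases j)
  case 0 then show ?thesis by (simp add: Dform_def coeff_monom_mult)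
next
  case (Suc i) note j = this
  show ?thesis
  proof (cases i)
    case 0 then show ?thesis using j by (simp add: Dform_def coeff_monom_mult coeff_pderiv distrib_right)
  next
    case (Suc l)
    then have "coeff (Dform c d q) j = (of_nat (Suc l) * of_nat (Suc (Suc l)) + c * of_nat (Suc (Suc l)) + d) * coeff q j"
      using j apply (simp add: Dform_def coeff_monom_mult coeff_pderiv)
      by (simp add: algebra_simps)
    then show ?thesis using j Suc by (simp add: algebra_simps power2_eq_square)
  qed
qed

lemma poly_coeffwise:
  fixes r q :: "'a::comm_ring_1 poly"
  assumes "\<And>j. coeff r j = f j * coeff q j"
  shows "poly r x = (\<Sum>j\<le>degree q. f j * coeff q j * x ^ j)"
proof -
  have dr: "degree r \<le> degree q"
    by (rule degree_le) (simp add: assms coeff_eq_0)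
  have "poly r x = (\<Sum>j\<le>degree r. coeff r j * x ^ j)" by (rule poly_altdef)
  also have "\<dots> = (\<Sum>j\<le>degree q. coeff r j * x ^ j)"
    by (rule sum.mono_neutral_left) (use dr in \<open>auto simp: coeff_eq_0\<close>)
  finally show ?thesis by (simp add: assms)
qed

definition Lf :: "(nat \<Rightarrow> complex) \<Rightarrow> complex poly \<Rightarrow> complex" where
  "Lf \<mu> q = (\<Sum>j\<le>degree q. \<mu> j * coeff q j)"

lemma Lf_bound:
  assumes "degree q \<le> N" shows "Lf \<mu> q = (\<Sum>j\<le>N. \<mu> j * coeff q j)"
  unfolding Lf_def
  by (rule sum.mono_neutral_left) (use assms in \<open>auto simp: coeff_eq_0\<close>)

lemma Lf_smult: "Lf \<mu> (smult a q) = a * Lf \<mu> q"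
proof -
  have "Lf \<mu> (smult a q) = (\<Sum>j\<le>degree q. \<mu> j * coeff (smult a q) j)"
    by (rule Lf_bound) simp
  thus ?thesis by (simp add: Lf_def sum_distrib_left mult_ac)
qed

lemma Lf_rec: "Lf \<mu> ([:-r,1:] * q) = Lf (\<lambda>j. \<mu> (Suc j) - r * \<mu> j) q"
proof -
  let ?D = "degree q"
  have eq: "[:-r,1:] * q = smult (-r) q + pCons 0 q" by simp
  have dg: "degree ([:-r,1:] * q) \<le> Suc ?D"
    by (metis degree_mult_le degree_pCons_eq_if add_Suc one_neq_zero pCons_eq_0_iff degree_1 add_0 le_trans order_refl degree_pCons_le)
  have "Lf \<mu> ([:-r,1:] * q) = (\<Sum>j\<le>Suc ?D. \<mu> j * coeff ([:-r,1:] * q) j)"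
    by (rule Lf_bound[OF dg])
  also have "\<dots> = (\<Sum>j\<le>Suc ?D. \<mu> j * (-r * coeff q j) + \<mu> j * coeff (pCons 0 q) j)"
    unfolding eq by (intro sum.cong refl) (simp add: algebra_simps)
  also have "\<dots> = (\<Sum>j\<le>Suc ?D. \<mu> j * (-r * coeff q j)) + (\<Sum>j\<le>Suc ?D. \<mu> j * coeff (pCons 0 q) j)"
    by (rule sum.distrib)
  also have "(\<Sum>j\<le>Suc ?D. \<mu> j * (-r * coeff q j)) = (\<Sum>j\<le>?D. \<mu> j * (-r * coeff q j))"
    by (simp add: coeff_eq_0)
  also have "(\<Sum>j\<le>Suc ?D. \<mu> j * coeff (pCons 0 q) j) = (\<Sum>j\<le>?D. \<mu> (Suc j) * coeff q j)"
    by (subst sum.atMost_Suc_shift) simp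
  finally have 1: "Lf \<mu> ([:-r,1:] * q) = (\<Sum>j\<le>?D. \<mu> j * (-r * coeff q j)) + (\<Sum>j\<le>?D. \<mu> (Suc j) * coeff q j)" .
  have "Lf (\<lambda>j. \<mu> (Suc j) - r * \<mu> j) q = (\<Sum>j\<le>?D. \<mu> j * (-r * coeff q j) + \<mu> (Suc j) * coeff q j)"
    unfolding Lf_def by (intro sum.cong) (simp_all add: algebra_simps)
  also have "\<dots> = (\<Sum>j\<le>?D. \<mu> j * (-r * coeff q j)) + (\<Sum>j\<le>?D. \<mu> (Suc j) * coeff q j)"
    by (rule sum.distrib)
  finally show ?thesis using 1 by simp
qed

lemma Lf_lin: "Lf (\<lambda>j. a j + b * c j) q = Lf a q + b * Lf c q"
  by (simp add: Lf_def sum.distrib sum_distrib_left algebra_simps)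

definition G :: "nat \<Rightarrow> (nat \<Rightarrow> complex) \<Rightarrow> complex poly" where
  "G m \<mu> = (\<Sum>j\<le>m. monom (of_nat (m choose j) * \<mu> j) (m - j))"

lemma poly_G: "poly (G m \<mu>) t = Lf \<mu> ([:t,1:]^m)"
proof -
  have "Lf \<mu> ([:t,1:]^m) = (\<Sum>j\<le>m. \<mu> j * coeff ([:t,1:]^m) j)"
    by (rule Lf_bound) (simp add: degree_power_le order_trans[OF degree_power_le])
  also have "\<dots> = (\<Sum>j\<le>m. of_nat (m choose j) * \<mu> j * t ^ (m - j))"
    by (intro sum.cong refl) (simp add: coeff_linear_poly_power)
  finally show ?thesis by (simp add: G_def poly_sum poly_monom)
qed

lemma degree_G: "degree (G m \<mu>) \<le> m"
  unfolding G_def by (intro degree_sum_le) (auto intro: order_trans[OF degree_monom_le])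

lemma smult_sum_right: "smult a (sum f A) = (\<Sum>x\<in>A. smult a (f x))"
  by (induction A rule: infinite_finite_induct) (simp_all add: smult_add_right)

lemma pderiv_sum: "finite A \<Longrightarrow> pderiv (sum f A) = (\<Sum>x\<in>A. pderiv (f x))"
  by (induction A rule: finite_induct) (simp_all add: pderiv_add)

lemma pderiv_G: "pderiv (G (Suc n) \<mu>) = smult (of_nat (Suc n)) (G n \<mu>)"
proof -
  have "pderiv (G (Suc n) \<mu>) = (\<Sum>j\<le>Suc n. monom (of_nat (Suc n - j) * (of_nat (Suc n choose j) * \<mu> j)) (Suc n - j - 1))"
    by (simp only: G_def pderiv_sum[OF finite_atMost] pderiv_monom)
  also have "\<dots> = (\<Sum>j\<le>n. monom (of_nat (Suc n - j) * (of_nat (Suc n choose j) * \<mu> j)) (Suc n - j - 1))"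
    by (subst sum.atMost_Suc) simp
  also have "\<dots> = (\<Sum>j\<le>n. smult (of_nat (Suc n)) (monom (of_nat (n choose j) * \<mu> j) (n - j)))"
  proof (intro sum.cong refl)
    fix j assume "j \<in> {..n}"
    have "(Suc n - j) * (Suc n choose j) = Suc n * (n choose j)"
      using binomial_absorb_comp[of "Suc n" j] by simp
    hence "(of_nat (Suc n - j) :: complex) * of_nat (Suc n choose j) = of_nat (Suc n) * of_nat (n choose j)"
      by (metis of_nat_mult)
    then show "monom (of_nat (Suc n - j) * (of_nat (Suc n choose j) * \<mu> j)) (Suc n - j - 1) =
          smult (of_nat (Suc n)) (monom (of_nat (n choose j) * \<mu> j) (n - j))"
      by (simp add: smult_monom mult.assoc[symmetric])
  qed
  also have "\<dots> = smult (of_nat (Suc n)) (G n \<mu>)"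
    by (simp add: G_def smult_sum_right)
  finally show ?thesis .
qed

lemma G_identity:
  "of_nat (Suc n) * poly (G n (\<lambda>j. \<mu> (Suc j) - r * \<mu> j)) t =
   of_nat (Suc n) * poly (G (Suc n) \<mu>) t - (t + r) * poly (pderiv (G (Suc n) \<mu>)) t"
proof -
  define X where "X = Lf (\<lambda>j. \<mu> (Suc j)) ([:t,1:]^n)"
  define Y where "Y = Lf \<mu> ([:t,1:]^n)"
  have 1: "poly (G n (\<lambda>j. \<mu> (Suc j) - r * \<mu> j)) t = X - r * Y"
    using Lf_lin[of "\<lambda>j. \<mu> (Suc j)" "-r" \<mu>] by (simp add: poly_G X_def Y_def)
  have "poly (G (Suc n) \<mu>) t = Lf \<mu> ([:-(-t),1:] * [:t,1:]^n)" by (simp add: poly_G)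
  also have "\<dots> = Lf (\<lambda>j. \<mu> (Suc j) - (-t) * \<mu> j) ([:t,1:]^n)" by (rule Lf_rec)
  also have "\<dots> = X + t * Y"
    using Lf_lin[of "\<lambda>j. \<mu> (Suc j)" "t" \<mu>] by (simp add: X_def Y_def)
  finally have 2: "poly (G (Suc n) \<mu>) t = X + t * Y" .
  have 3: "poly (pderiv (G (Suc n) \<mu>)) t = of_nat (Suc n) * Y"
    by (simp add: pderiv_G poly_G Y_def)
  show ?thesis unfolding 1 2 3 by (simp add: algebra_simps)
qed

lemma LD:
  fixes \<rho> :: "nat \<Rightarrow> complex"
  shows "poly (\<Prod>i<k. [:-\<rho> i,1:]) t \<noteq> 0 \<Longrightarrow>
    poly (pderiv (\<Prod>i<k. [:-\<rho> i,1:])) t = poly (\<Prod>i<k. [:-\<rho> i,1:]) t * (\<Sum>i<k. 1/(t - \<rho> i))"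
proof (induction k)
  case 0 then show ?case by simp
next
  case (Suc k)
  define P where "P = (\<Prod>i<k. [:-\<rho> i,1:])"
  have PS: "(\<Prod>i<Suc k. [:-\<rho> i,1:]) = P * [:-\<rho> k,1:]" by (simp add: P_def)
  have ne: "poly P t \<noteq> 0" "t - \<rho> k \<noteq> 0" using Suc.prems unfolding PS by auto
  have IH: "poly (pderiv P) t = poly P t * (\<Sum>i<k. 1/(t - \<rho> i))" using Suc.IH ne(1) by (simp add: P_def)
  have d1: "pderiv [:-\<rho> k, 1:] = 1" by (simp add: pderiv_pCons)
  have "pderiv (P * [:-\<rho> k,1:]) = P + [:-\<rho> k,1:] * pderiv P"
    by (simp only: pderiv_mult d1 mult_1_right)
  hence E: "poly (pderiv (P * [:-\<rho> k,1:])) t = poly P t + (t - \<rho> k) * (poly P t * (\<Sum>i<k. 1/(t - \<rho> i)))"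
    by (simp add: IH left_diff_distrib)
  have A: "poly (P * [:-\<rho> k,1:]) t = poly P t * (t - \<rho> k)" by (simp add: algebra_simps)
  have B: "(\<Sum>i<Suc k. 1/(t - \<rho> i)) = (\<Sum>i<k. 1/(t-\<rho> i)) + 1/(t - \<rho> k)" by simp
  show ?case unfolding PS A B E using ne by (simp add: field_simps)
qed

lemma disk_elem:
  fixes z :: complex and h :: real
  assumes h: "h > 0" and zh: "Im z > h"
  shows "cmod (1/z + \<i> * complex_of_real (1/(2*h))) < 1/(2*h)"
proof -
  define a where "a = Re z"
  define b where "b = Im z"
  define N where "N = a^2 + b^2"
  define c where "c = 1/(2*h)"
  have b: "b > h" using zh by (simp add: b_def)
  have N: "N > 0" using b h unfolding N_def by (smt (verit) zero_less_power2 sum_power2_gt_zero_iff)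
  have Re: "Re (1/z + \<i> * complex_of_real c) = a / N"
    by (simp add: Re_divide a_def b_def N_def)
  have Im: "Im (1/z + \<i> * complex_of_real c) = c - b / N"
    by (simp add: Im_divide a_def b_def N_def)
  have "2 * c * b > 1" using b h by (simp add: c_def field_simps)
  hence "(a/N)^2 + (c - b/N)^2 < c^2"
  proof -
    assume cb: "2 * c * b > 1"
    have "(a/N)^2 + (c - b/N)^2 = (a^2+b^2)/N^2 - 2*c*b/N + c^2"
      using N by (simp add: field_simps power2_eq_square)
    also have "\<dots> = N/N^2 - 2*c*b/N + c^2" by (simp add: N_def)
    also have "\<dots> = (1 - 2*c*b)/N + c^2" using N by (simp add: field_simps power2_eq_square)
    also have "\<dots> < c^2" using cb N by (simp add: divide_neg_pos)
    finally show ?thesis .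
  qed
  hence "(cmod (1/z + \<i> * complex_of_real c))^2 < c^2"
    by (simp only: cmod_power2 Re Im)
  moreover have "c \<ge> 0" using h by (simp add: c_def)
  ultimately show ?thesis unfolding c_def[symmetric] using power2_less_imp_less by blast
qed

lemma LL:
  fixes \<rho> :: "nat \<Rightarrow> complex" and t r :: complex and M :: real
  assumes k: "1 \<le> k" and im: "\<And>i. i<k \<Longrightarrow> Im (\<rho> i) < 0" and ht: "0 \<le> Im t"
    and hr: "Im r = 0" and kM: "real k \<le> M"
  shows "complex_of_real M \<noteq> (t + r) * (\<Sum>i<k. 1/(t - \<rho> i))"
proof
  define S where "S = (\<Sum>i<k. 1/(t - \<rho> i))"
  define u where "u = t + r"
  assume eq: "complex_of_real M = (t + r) * (\<Sum>i<k. 1/(t - \<rho> i))"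
  hence eq': "of_real M = u * S" by (simp add: u_def S_def)
  have Mpos: "M > 0" using k kM by simp
  have u0: "u \<noteq> 0" using eq' Mpos by auto
  have SMu: "S = of_real M / u" using eq' u0 by (simp add: field_simps)
  have Imu: "Im u = Im t" using hr by (simp add: u_def)
  have Imz: "\<And>i. i<k \<Longrightarrow> Im (t - \<rho> i) > Im t" using im by simp
  show False
  proof (cases "Im t = 0")
    case True
    have "Im S = 0" using True Imu by (simp add: SMu Im_divide)
    moreover have "Im S < 0"
    proof -
      have "Im S = (\<Sum>i<k. Im (1/(t - \<rho> i)))" by (simp add: S_def Im_sum)
      also have "\<dots> < 0"
      proof -
        have "0 < (\<Sum>i<k. - Im (1/(t - \<rho> i)))"
        proof (rule sum_pos)
          show "finite {..<k}" by simp
          show "{..<k} \<noteq> {}" using k by (simp add: lessThan_empty_iff)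
          fix i assume "i \<in> {..<k}"
          hence pos: "Im (t - \<rho> i) > 0" using Imz True by fastforce
          hence "(Re (t - \<rho> i))^2 + (Im (t - \<rho> i))^2 > 0"
            by (smt (verit) zero_less_power2 sum_power2_gt_zero_iff)
          then show "0 < - Im (1/(t - \<rho> i))" using pos
            by (simp add: Im_divide divide_neg_pos)
        qed
        thus ?thesis by (simp add: sum_negf)
      qed
      finally show ?thesis .
    qed
    ultimately show False by simp
  next
    case False
    define h where "h = Im t"
    have h: "h > 0" using False ht by (simp add: h_def)
    define c where "c = 1/(2*h)"
    have c: "c > 0" using h by (simp add: c_def)
    have each: "\<And>i. i<k \<Longrightarrow> cmod (1/(t - \<rho> i) + \<i> * complex_of_real c) < c"
      unfolding c_def using Imz h h_def by (intro disk_elem) auto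
    have "cmod (\<Sum>i<k. 1/(t - \<rho> i) + \<i> * complex_of_real c) \<le> (\<Sum>i<k. cmod (1/(t - \<rho> i) + \<i> * complex_of_real c))"
      by (rule norm_sum)
    also have "\<dots> < (\<Sum>i<k. c)"
      using k each by (intro sum_strict_mono) (auto simp: lessThan_empty_iff)
    also have "\<dots> = real k * c" by simp
    finally have lt: "cmod (S + \<i> * complex_of_real (real k * c)) < real k * c"
      by (simp add: S_def sum.distrib mult.left_commute)
    define a where "a = Re u"
    define N where "N = a^2 + h^2"
    have N: "N > 0" using h unfolding N_def by (smt (verit) zero_less_power2 sum_power2_gt_zero_iff)
    have Re: "Re (S + \<i> * complex_of_real (real k * c)) = M * a / N"
      by (simp add: SMu Re_divide a_def N_def h_def Imu)
    have Im: "Im (S + \<i> * complex_of_real (real k * c)) = real k * c - M * h / N"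
      by (simp add: SMu Im_divide a_def N_def h_def Imu)
    have "(M * a / N)^2 + (real k * c - M * h / N)^2 = M^2 * (a^2+h^2) / N^2 - real k * M * (2 * c * h) / N + (real k * c)^2"
      using N by (simp add: field_simps power2_eq_square)
    also have "\<dots> = M^2 * N / N^2 - real k * M * (2 * c * h) / N + (real k * c)^2"
      by (simp add: N_def)
    also have "\<dots> = (M^2 - real k * M * (2 * c * h)) / N + (real k * c)^2"
      using N by (simp add: field_simps power2_eq_square)
    also have "2 * c * h = 1" using h by (simp add: c_def)
    also have "(M^2 - real k * M * 1) / N + (real k * c)^2 \<ge> (real k * c)^2"
    proof -
      have "M^2 - real k * M \<ge> 0" using kM Mpos by (simp add: power2_eq_square mult_right_mono)
      thus ?thesis using N by simp
    qed
    finally have ge: "(cmod (S + \<i> * complex_of_real (real k * c)))^2 \<ge> (real k * c)^2"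
      by (simp only: cmod_power2 Re Im)
    have "0 \<le> real k * c" using c by simp
    hence "(cmod (S + \<i> * complex_of_real (real k * c)))^2 < (real k * c)^2"
      using lt by (simp add: power_strict_mono)
    with ge show False by simp
  qed
qed

definition Ginv :: "nat \<Rightarrow> (nat \<Rightarrow> complex) \<Rightarrow> bool" where
  "Ginv m \<mu> \<longleftrightarrow> (\<forall>t. poly (G m \<mu>) t = 0 \<longrightarrow> Im t < 0)"

lemma SL:
  assumes hr: "Im r = 0" and I: "Ginv (Suc n) \<mu>"
  shows "Ginv n (\<lambda>j. \<mu> (Suc j) - r * \<mu> j)"
  unfolding Ginv_def
proof (intro allI impI)
  fix t assume root: "poly (G n (\<lambda>j. \<mu> (Suc j) - r * \<mu> j)) t = 0"
  show "Im t < 0"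
  proof (rule ccontr)
    assume "\<not> Im t < 0" hence ht: "Im t \<ge> 0" by simp
    define g where "g = G (Suc n) \<mu>"
    have gt: "poly g t \<noteq> 0" using I ht unfolding Ginv_def g_def by force
    have g0: "g \<noteq> 0" using gt by auto
    obtain rt where dec: "smult (lead_coeff g) (\<Prod>i<degree g. [:-rt i,1:]) = g"
      by (rule complex_poly_decompose')
    define k where "k = degree g"
    define P where "P = (\<Prod>i<k. [:-rt i,1:])"
    define lc where "lc = lead_coeff g"
    have gP: "g = smult lc P" using dec by (simp add: P_def k_def lc_def)
    have lc: "lc \<noteq> 0" using g0 by (simp add: lc_def)
    have rootsIm: "Im (rt i) < 0" if "i < k" for i
    proof -
      have "poly P (rt i) = 0" unfolding P_def poly_prod using that
        by (intro prod_zero bexI[of _ i]) auto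
      hence "poly (G (Suc n) \<mu>) (rt i) = 0" using gP by (simp add: g_def[symmetric])
      thus ?thesis using I unfolding Ginv_def by blast
    qed
    have kle: "k \<le> Suc n" using degree_G[of "Suc n" \<mu>] by (simp add: k_def g_def)
    have Pt: "poly P t \<noteq> 0" using gt gP by simp
    have pd: "poly (pderiv g) t = lc * (poly P t * (\<Sum>i<k. 1/(t - rt i)))"
      using LD[of rt k t] Pt by (simp add: gP pderiv_smult P_def)
    have "of_nat (Suc n) * 0 = of_nat (Suc n) * poly g t - (t + r) * poly (pderiv g) t"
      using G_identity[of n \<mu> r t] root by (simp add: g_def)
    hence "of_nat (Suc n) * (lc * poly P t) = (t + r) * (lc * (poly P t * (\<Sum>i<k. 1/(t - rt i))))"
      using gP pd by simp
    hence "(lc * poly P t) * of_nat (Suc n) = (lc * poly P t) * ((t + r) * (\<Sum>i<k. 1/(t - rt i)))"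
      by (simp only: mult_ac)
    hence "of_nat (Suc n) = (t + r) * (\<Sum>i<k. 1/(t - rt i))"
      using lc Pt by (simp only: mult_cancel_left) simp
    hence eq: "complex_of_real (real (Suc n)) = (t + r) * (\<Sum>i<k. 1/(t - rt i))"
      by simp
    show False
    proof (cases "k = 0")
      case True
      have "complex_of_real (real (Suc n)) \<noteq> 0" by (simp only: of_real_eq_0_iff of_nat_eq_0_iff)
      then show False using eq True by simp
    next
      case False
      show False using LL[of k rt t r "real (Suc n)"] False rootsIm ht hr kle eq by auto
    qed
  qed
qed

lemma MI:
  assumes "\<And>i. i<n \<Longrightarrow> Im (r i) = 0"
  shows "Ginv n \<mu> \<Longrightarrow> Lf \<mu> (\<Prod>i<n. [:-r i,1:]) \<noteq> 0"
  using assms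
proof (induction n arbitrary: \<mu>)
  case 0
  have "poly (G 0 \<mu>) 0 = \<mu> 0" by (simp add: G_def poly_monom)
  hence "\<mu> 0 \<noteq> 0" using "0.prems"(1) unfolding Ginv_def by force
  then show ?case by (simp add: Lf_def)
next
  case (Suc n)
  have "(\<Prod>i<Suc n. [:-r i,1:]) = [:-r n,1:] * (\<Prod>i<n. [:-r i,1:])" by (simp add: mult.commute)
  hence "Lf \<mu> (\<Prod>i<Suc n. [:-r i,1:]) = Lf (\<lambda>j. \<mu> (Suc j) - r n * \<mu> j) (\<Prod>i<n. [:-r i,1:])"
    by (simp only: Lf_rec)
  moreover have "Ginv n (\<lambda>j. \<mu> (Suc j) - r n * \<mu> j)"
    using SL[of "r n" n \<mu>] Suc.prems by simp
  ultimately show ?case using Suc.IH Suc.prems by simp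
qed

lemma quad_root:
  fixes A B C :: real and s :: complex
  assumes A: "A \<ge> 0" and B: "B \<ge> 0" and C: "C \<ge> 0" and disc: "4 * A * C \<le> B^2"
    and nz: "A \<noteq> 0 \<or> B \<noteq> 0 \<or> C \<noteq> 0"
    and eq: "of_real A * s^2 + of_real B * s + of_real C = 0"
  shows "Im s = 0 \<and> Re s \<le> 0"
proof -
  define a where "a = Re s"
  define b where "b = Im s"
  have re: "A * (a^2 - b^2) + B * a + C = 0"
    using arg_cong[OF eq, of Re] by (simp add: a_def b_def power2_eq_square)
  have im: "b * (2 * A * a + B) = 0"
    using arg_cong[OF eq, of Im] by (simp add: a_def b_def power2_eq_square algebra_simps)
  have b0: "b = 0"
  proof (rule ccontr)
    assume "b \<noteq> 0"
    hence lin: "2 * A * a + B = 0" using im by simp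
    show False
    proof (cases "A = 0")
      case True
      hence "B = 0" using lin by simp
      hence "C = 0" using re True by simp
      thus False using nz True \<open>B = 0\<close> by simp
    next
      case False
      hence Ap: "A > 0" using A by simp
      have "4 * A * (A * (a^2 - b^2) + B * a + C) = (2*A*a + B)^2 - 4 * A^2 * b^2 - (B^2 - 4*A*C)"
        by (simp add: power2_eq_square algebra_simps)
      hence "0 = - 4 * A^2 * b^2 - (B^2 - 4*A*C)" using re lin by simp
      moreover have "A^2 * b^2 > 0" using Ap \<open>b \<noteq> 0\<close> by simp
      ultimately show False using disc by simp
    qed
  qed
  have "a \<le> 0"
  proof (rule ccontr)
    assume "\<not> a \<le> 0" hence ap: "a > 0" by simp
    have n1: "A * a^2 \<ge> 0" "B * a \<ge> 0" using A B ap by simp_all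
    have s0: "A*a^2 + B*a + C = 0" using re b0 by simp
    have "A * a^2 = 0" "B * a = 0" "C = 0" using s0 n1 C by linarith+
    thus False using ap nz by simp
  qed
  thus ?thesis using b0 by (simp add: a_def b_def)
qed

lemma poly_Dform_pow:
  fixes c d t x :: complex
  shows "(x + t)^2 * poly (Dform c d ([:t,1:]^m)) x =
    (x + t)^m * (of_nat m * of_nat (m - 1) * x^2 + c * of_nat m * x * (x + t) + d * (x + t)^2)"
proof (cases m)
  case 0 then show ?thesis by (simp add: Dform_def)
next
  case (Suc m') note m = this
  show ?thesis
  proof (cases m')
    case 0 then show ?thesis using m by (simp add: Dform_def pderiv_pCons poly_monom algebra_simps power2_eq_square)
  next
    case (Suc k)
    have d1: "pderiv ([:t,1:]^Suc (Suc k)) = smult (of_nat (Suc (Suc k))) ([:t,1:]^Suc k)"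
      by (simp only: pderiv_power_Suc) (simp add: pderiv_pCons)
    have d2: "pderiv (pderiv ([:t,1:]^Suc (Suc k))) = smult (of_nat (Suc (Suc k)) * of_nat (Suc k)) ([:t,1:]^k)"
      unfolding d1 pderiv_smult by (simp only: pderiv_power_Suc) (simp add: pderiv_pCons)
    have E1: "poly (Dform c d ([:t,1:]^Suc (Suc k))) x =
       x^2 * (of_nat (Suc (Suc k)) * of_nat (Suc k) * (x+t)^k) + c * (x * (of_nat (Suc (Suc k)) * (x+t)^Suc k)) + d * (x+t)^Suc (Suc k)"
      unfolding Dform_def d2 unfolding d1 by (simp add: poly_monom add.commute del: power_Suc)
    have gen: "\<And>y a b :: complex. y^2 * (x^2 * (a*b*y^k) + c*(x*(a*y^(Suc k))) + d*y^(Suc(Suc k))) = y^(Suc(Suc k)) * (a*b*x^2 + c*a*x*y + d*y^2)"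
      by (simp add: algebra_simps power2_eq_square)
    show ?thesis unfolding m Suc E1 using gen[of "x+t"] by simp
  qed
qed

lemma Lf_Dform:
  fixes c d x :: complex
  shows "Lf (\<lambda>j. (of_nat j ^ 2 + (c - 1) * of_nat j + d) * x ^ j) q = poly (Dform c d q) x"
  unfolding poly_coeffwise[OF coeff_Dform] Lf_def by (intro sum.cong refl) (simp add: mult_ac)

lemma Ginv_init:
  fixes c d :: real and x :: complex
  assumes c: "c \<ge> 0" and d: "d \<ge> 0" and cd: "4*d \<le> c^2" and x: "Im x > 0"
    and nd: "d \<noteq> 0 \<or> (c \<noteq> 0 \<and> m \<ge> 1) \<or> m \<ge> 2"
  shows "Ginv m (\<lambda>j. (of_nat j ^ 2 + (complex_of_real c - 1) * of_nat j + complex_of_real d) * x ^ j)"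
  unfolding Ginv_def
proof (intro allI impI)
  fix t assume root: "poly (G m (\<lambda>j. (of_nat j ^ 2 + (complex_of_real c - 1) * of_nat j + complex_of_real d) * x ^ j)) t = 0"
  have x0: "x \<noteq> 0" using x by auto
  have "poly (Dform (complex_of_real c) (complex_of_real d) ([:t,1:]^m)) x = 0"
    using root by (simp add: poly_G Lf_Dform)
  hence "(x + t)^m * (of_nat m * of_nat (m - 1) * x^2 + of_real c * of_nat m * x * (x + t) + of_real d * (x + t)^2) = 0"
    using poly_Dform_pow[of x t "complex_of_real c" "complex_of_real d" m] by simp
  show "Im t < 0"
  proof (cases "x + t = 0")
    case True
    hence "t = - x" by (simp add: add_eq_0_iff)
    thus ?thesis using x by simp
  next
    case False
    define y where "y = x + t"
    define s where "s = y / x"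
    have E: "of_nat m * of_nat (m - 1) * x^2 + of_real c * of_nat m * x * y + of_real d * y^2 = 0"
      using \<open>(x + t)^m * _ = 0\<close> False by (simp add: y_def)
    have ys: "y = s * x" using x0 by (simp add: s_def)
    have "x^2 * (of_real d * s^2 + of_real (c * real m) * s + of_real (real m * real (m - 1))) = 0"
      using E unfolding ys by (simp add: algebra_simps power2_eq_square)
    hence eqs: "of_real d * s^2 + of_real (c * real m) * s + of_real (real m * real (m - 1)) = 0"
      using x0 by simp
    have disc: "4 * d * (real m * real (m - 1)) \<le> (c * real m)^2"
    proof -
      have "4 * d * (real m * real (m - 1)) \<le> c^2 * (real m * real (m - 1))"
        using cd by (intro mult_right_mono) auto
      also have "\<dots> \<le> c^2 * (real m * real m)"
        by (intro mult_left_mono) auto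
      finally show ?thesis by (simp add: power2_eq_square mult_ac)
    qed
    have nz: "d \<noteq> 0 \<or> c * real m \<noteq> 0 \<or> real m * real (m - 1) \<noteq> 0"
      using nd by auto
    have sr: "Im s = 0 \<and> Re s \<le> 0"
      using quad_root[OF d _ _ disc nz eqs] c by simp
    have "t = x * (s - 1)" using ys by (simp add: y_def algebra_simps)
    hence "Im t = Im x * (Re s - 1)" using sr by simp
    thus ?thesis using x sr by (simp add: mult_pos_neg)
  qed
qed

lemma coeff_T: "coeff (Abs_poly (\<lambda>k. (\<gamma>::nat\<Rightarrow>real) k * coeff p k)) = (\<lambda>k. \<gamma> k * coeff p k)"
  by (rule coeff_Abs_poly[of "degree p"]) (simp add: coeff_eq_0)

lemma sufficiency:
  fixes \<alpha> \<beta> :: real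
  assumes a: "\<alpha> \<ge> -1" and b0: "0 \<le> \<beta>" and b1: "\<beta> \<le> (\<alpha>+1)^2/4"
  shows "classical_multiplier_sequence (\<lambda>k. real k ^ 2 + \<alpha> * real k + \<beta>)"
  unfolding classical_multiplier_sequence_def
proof (intro allI impI)
  fix p :: "real poly" assume rz: "only_real_zeros p"
  define \<gamma> where "\<gamma> = (\<lambda>k. real k ^ 2 + \<alpha> * real k + \<beta>)"
  define Tp where "Tp = Abs_poly (\<lambda>k. \<gamma> k * coeff p k)"
  have cT: "\<And>k. coeff Tp k = \<gamma> k * coeff p k" unfolding Tp_def coeff_T by simp
  have "only_real_zeros Tp"
  proof (cases "p = 0 \<or> (degree p = 0 \<and> \<beta> = 0) \<or> (degree p = 1 \<and> \<alpha> = -1 \<and> \<beta> = 0)")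
    case True
    have "Tp = 0"
    proof (rule poly_eqI)
      fix k
      show "coeff Tp k = coeff 0 k"
      proof (cases "k > degree p")
        case True then show ?thesis by (simp add: cT coeff_eq_0)
      next
        case False
        then show ?thesis using \<open>p = 0 \<or> _\<close>
          by (cases k) (auto simp: cT \<gamma>_def)
      qed
    qed
    then show ?thesis by (simp add: only_real_zeros_def)
  next
    case False
    hence p0: "p \<noteq> 0" by auto
    define m where "m = degree p"
    have nd: "\<beta> \<noteq> 0 \<or> (\<alpha> + 1 \<noteq> 0 \<and> m \<ge> 1) \<or> m \<ge> 2"
      using False unfolding m_def by (cases "degree p") auto
    have rz': "\<And>z. poly (map_poly complex_of_real p) z = 0 \<Longrightarrow> z \<in> \<real>"
      using rz p0 by (simp add: only_real_zeros_def)
    have "\<forall>z. poly (map_poly complex_of_real Tp) z = 0 \<longrightarrow> z \<in> \<real>"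
    proof (intro allI impI)
      fix z assume rootz: "poly (map_poly complex_of_real Tp) z = 0"
      show "z \<in> \<real>"
      proof (rule ccontr)
        assume "z \<notin> \<real>"
        hence imz: "Im z \<noteq> 0" by (simp add: complex_is_Real_iff)
        define x where "x = (if Im z > 0 then z else cnj z)"
        have imx: "Im x > 0" using imz by (simp add: x_def)
        have realc: "\<And>n. coeff (map_poly complex_of_real Tp) n \<in> \<real>"
          by (simp add: coeff_map_poly)
        have rootx: "poly (map_poly complex_of_real Tp) x = 0"
          using rootz real_poly_cnj_root_iff[OF realc, of z] by (simp add: x_def)
        define \<mu> where "\<mu> = (\<lambda>j. (of_nat j ^ 2 + (complex_of_real (\<alpha>+1) - 1) * of_nat j + complex_of_real \<beta>) * x ^ j)"
        define pc where "pc = map_poly complex_of_real p"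
        have pc0: "pc \<noteq> 0" using p0 by (simp add: pc_def map_poly_eq_0_iff)
        have dpc: "degree pc = m" by (simp add: pc_def m_def degree_map_poly)
        have cc: "coeff (map_poly complex_of_real Tp) j =
            (of_nat j ^ 2 + (complex_of_real (\<alpha>+1) - 1) * of_nat j + complex_of_real \<beta>) * coeff pc j" for j
          by (simp add: coeff_map_poly cT \<gamma>_def pc_def)
        have "poly (map_poly complex_of_real Tp) x = Lf \<mu> pc"
          unfolding poly_coeffwise[OF cc] Lf_def \<mu>_def by (intro sum.cong refl) (simp add: mult_ac)
        obtain rt where dec: "smult (lead_coeff pc) (\<Prod>i<degree pc. [:-rt i,1:]) = pc"
          by (rule complex_poly_decompose')
        have rtreal: "Im (rt i) = 0" if "i < m" for i
        proof -
          have "poly (\<Prod>i<degree pc. [:-rt i,1:]) (rt i) = 0" unfolding poly_prod using that dpc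
            by (intro prod_zero bexI[of _ i]) auto
          hence "poly pc (rt i) = 0" by (subst dec[symmetric]) simp
          hence "rt i \<in> \<real>" using rz' by (simp add: pc_def)
          thus ?thesis by (simp add: complex_is_Real_iff)
        qed
        have gi: "Ginv m \<mu>" unfolding \<mu>_def
          by (rule Ginv_init) (use a b0 b1 imx nd in \<open>auto simp: field_simps\<close>)
        have "Lf \<mu> (\<Prod>i<m. [:-rt i,1:]) \<noteq> 0" using MI[of m rt, OF rtreal gi] by simp
        moreover have "Lf \<mu> pc = lead_coeff pc * Lf \<mu> (\<Prod>i<m. [:-rt i,1:])"
          by (subst dec[symmetric]) (simp add: Lf_smult dpc)
        moreover have "lead_coeff pc \<noteq> 0" using pc0 by simp
        ultimately show False using rootx \<open>poly _ x = Lf \<mu> pc\<close> by simp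
      qed
    qed
    then show ?thesis by (simp add: only_real_zeros_def)
  qed
  then show "only_real_zeros (Abs_poly (\<lambda>k. (real k ^ 2 + \<alpha> * real k + \<beta>) * coeff p k))"
    by (simp add: Tp_def \<gamma>_def)
qed

lemma not_orz:
  assumes "q \<noteq> 0" "poly (map_poly complex_of_real q) z = 0" "Im z \<noteq> 0"
  shows "\<not> only_real_zeros q"
  using assms by (auto simp: only_real_zeros_def complex_is_Real_iff)

lemma nec_gamma_nonneg:
  fixes \<alpha> \<beta> :: real
  defines "\<gamma> \<equiv> (\<lambda>k. real k ^ 2 + \<alpha> * real k + \<beta>)"
  assumes cms: "classical_multiplier_sequence \<gamma>"
  shows "\<gamma> k \<ge> 0"
proof (rule ccontr)
  assume "\<not> \<gamma> k \<ge> 0"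
  hence neg: "\<gamma> k < 0" by simp
  define N where "N = nat \<lceil>\<bar>\<alpha>\<bar> + \<bar>\<beta>\<bar>\<rceil> + 1"
  have big: "\<gamma> j \<ge> 0" if "j > N" for j
  proof -
    have j1: "real j \<ge> \<bar>\<alpha>\<bar> + \<bar>\<beta>\<bar> + 1" using that unfolding N_def by linarith
    have "\<alpha> * real j \<ge> - \<bar>\<alpha>\<bar> * real j" using mult_right_mono[of "-\<bar>\<alpha>\<bar>" \<alpha> "real j"] by simp
    moreover have "real j * (real j - \<bar>\<alpha>\<bar>) \<ge> 1 * (\<bar>\<beta>\<bar> + 1)"
      using j1 by (intro mult_mono) auto
    ultimately show ?thesis unfolding \<gamma>_def by (simp add: power2_eq_square algebra_simps)
  qed
  define S where "S = {j. \<gamma> j < 0}"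
  have finS: "finite S" by (rule finite_subset[of _ "{..N}"]) (use big in \<open>force simp: S_def not_less\<close>)+
  define K where "K = Max S"
  have KS: "K \<in> S" using finS neg unfolding K_def by (intro Max_in) (auto simp: S_def)
  have gK: "\<gamma> K < 0" using KS by (simp add: S_def)
  have g1: "\<gamma> (K+1) \<ge> 0"
    using Max_ge[OF finS, of "K+1"] unfolding K_def[symmetric] by (force simp: S_def)
  have g2: "\<gamma> (K+2) \<ge> 0"
    using Max_ge[OF finS, of "K+2"] unfolding K_def[symmetric] by (force simp: S_def)
  have conv: "\<gamma> (K+2) = 2 * \<gamma> (K+1) - \<gamma> K + 2"
    unfolding \<gamma>_def by (simp add: power2_eq_square algebra_simps)
  have g2p: "\<gamma> (K+2) > 0" using conv g1 gK by linarith
  define p :: "real poly" where "p = monom 1 (K+2) - monom 1 K"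
  have pc: "map_poly complex_of_real p = monom 1 (K+2) - monom 1 K"
    by (intro poly_eqI) (simp add: p_def coeff_map_poly coeff_monom)
  have p0: "p \<noteq> 0" proof assume "p = 0" hence "coeff p K = 0" by simp thus False by (simp add: p_def coeff_monom) qed
  have "only_real_zeros p"
    unfolding only_real_zeros_def
  proof (intro disjI2 allI impI)
    fix z :: complex assume "poly (map_poly complex_of_real p) z = 0"
    hence "z^K * (z - 1) * (z + 1) = 0" unfolding pc by (simp add: poly_monom algebra_simps power2_eq_square)
    hence "z^K = 0 \<or> z - 1 = 0 \<or> z + 1 = 0" by (simp only: mult_eq_0_iff) blast
    hence "z = 0 \<or> z = 1 \<or> z = -1" using eq_neg_iff_add_eq_0[of z 1] by auto
    thus "z \<in> \<real>" by auto
  qed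
  hence orz: "only_real_zeros (Abs_poly (\<lambda>k. \<gamma> k * coeff p k))"
    using cms unfolding classical_multiplier_sequence_def by blast
  define Tp where "Tp = Abs_poly (\<lambda>k. \<gamma> k * coeff p k)"
  have cT: "coeff Tp j = \<gamma> j * coeff p j" for j unfolding Tp_def coeff_T by simp
  have Tpc: "map_poly complex_of_real Tp = monom (of_real (\<gamma> (K+2))) (K+2) - monom (of_real (\<gamma> K)) K"
    by (intro poly_eqI) (simp add: cT p_def coeff_map_poly coeff_monom)
  have Tp0: "Tp \<noteq> 0" proof assume "Tp = 0" hence "coeff Tp K = 0" by simp thus False using gK by (simp add: cT p_def coeff_monom) qed
  define z where "z = \<i> * complex_of_real (sqrt (- \<gamma> K / \<gamma> (K+2)))"
  have pos: "- \<gamma> K / \<gamma> (K+2) > 0" using gK g2p by (simp add: divide_neg_pos)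
  have z2: "z^2 = of_real (\<gamma> K / \<gamma> (K+2))"
  proof -
    have sq: "(sqrt (- \<gamma> K / \<gamma> (K+2)))^2 = - \<gamma> K / \<gamma> (K+2)" using pos by simp
    have "z^2 = - (complex_of_real ((sqrt (- \<gamma> K / \<gamma> (K+2)))^2))"
      by (simp add: z_def power_mult_distrib of_real_power)
    also have "\<dots> = of_real (\<gamma> K / \<gamma> (K+2))" unfolding sq by simp
    finally show ?thesis .
  qed
  have "poly (map_poly complex_of_real Tp) z = z^K * (of_real (\<gamma> (K+2)) * z^2 - of_real (\<gamma> K))"
    unfolding Tpc by (simp add: poly_monom algebra_simps power2_eq_square)
  also have "\<dots> = 0" using g2p by (simp add: z2 field_simps)
  finally have root: "poly (map_poly complex_of_real Tp) z = 0" .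
  have "Im z \<noteq> 0" using pos gK g2p by (simp add: z_def)
  hence "\<not> only_real_zeros Tp" using not_orz[OF Tp0 root] by simp
  thus False using orz by (simp add: Tp_def)
qed

lemma map_of_real_linear_power:
  "map_poly complex_of_real ([:a,b:]^n) = [:complex_of_real a, complex_of_real b:]^n"
proof (rule poly_eqI)
  fix i
  have dg: "degree ([:a,b:]^n) \<le> n" "degree ([:complex_of_real a, complex_of_real b:]^n) \<le> n"
    by (rule order_trans[OF degree_power_le], simp)+
  show "coeff (map_poly complex_of_real ([:a,b:]^n)) i = coeff ([:complex_of_real a, complex_of_real b:]^n) i"
  proof (cases "i \<le> n")
    case True then show ?thesis by (simp add: coeff_map_poly coeff_linear_poly_power)
  next
    case False then show ?thesis using dg by (simp add: coeff_map_poly coeff_eq_0)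
  qed
qed

lemma nec_disc:
  fixes \<alpha> \<beta> :: real
  defines "\<gamma> \<equiv> (\<lambda>k. real k ^ 2 + \<alpha> * real k + \<beta>)"
  assumes cms: "classical_multiplier_sequence \<gamma>"
  shows "4 * \<beta> \<le> (\<alpha>+1)^2"
proof (rule ccontr)
  define c where "c = \<alpha> + 1"
  define d where "d = \<beta>"
  assume "\<not> 4 * \<beta> \<le> (\<alpha>+1)^2"
  hence epos: "4*d - c^2 > 0" by (simp add: c_def d_def)
  define e where "e = 4*d - c^2"
  have e: "e > 0" using epos by (simp add: e_def)
  have d: "d > 0" using epos by (smt (verit) zero_le_power2)
  define k where "k = nat \<lceil>4*d/e\<rceil>"
  define n where "n = Suc (Suc k)"
  define m where "m = real n"
  have "real k \<ge> 4*d/e" unfolding k_def by linarith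
  hence "m > 4*d/e" by (simp add: m_def n_def)
  hence me: "m * e > 4 * d" using e by (simp add: field_simps)
  have m1: "real (n - 1) = m - 1" by (simp add: m_def n_def)
  have m2: "m \<ge> 2" by (simp add: m_def n_def)
  define p :: "real poly" where "p = [:1,1:]^n"
  have pc: "map_poly complex_of_real p = [:1,1:]^n"
    using map_of_real_linear_power[of 1 1 n] by (simp add: p_def)
  have p0: "p \<noteq> 0" by (simp add: p_def)
  have "only_real_zeros p"
    unfolding only_real_zeros_def
  proof (intro disjI2 allI impI)
    fix z :: complex assume "poly (map_poly complex_of_real p) z = 0"
    hence "1 + z = 0" unfolding pc by simp
    hence "z = -1" using eq_neg_iff_add_eq_0[of z 1] by (simp add: add.commute)
    thus "z \<in> \<real>" by simp
  qed
  hence orz: "only_real_zeros (Abs_poly (\<lambda>k. \<gamma> k * coeff p k))"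
    using cms unfolding classical_multiplier_sequence_def by blast
  define Tp where "Tp = Abs_poly (\<lambda>k. \<gamma> k * coeff p k)"
  have cT: "coeff Tp j = \<gamma> j * coeff p j" for j unfolding Tp_def coeff_T by simp
  have cm: "coeff ([:1,1:]^n :: complex poly) j = of_real (coeff p j)" for j
    using arg_cong[OF pc, of "\<lambda>q. coeff q j"] by (simp add: coeff_map_poly)
  have Tpc: "map_poly complex_of_real Tp = Dform (of_real c) (of_real d) ([:1,1:]^n)"
    by (intro poly_eqI) (simp add: coeff_Dform cm cT coeff_map_poly \<gamma>_def c_def d_def)
  define A where "A = m * (m - 1) + c * m + d"
  define B where "B = c * m + 2 * d"
  define C where "C = d"
  have Eq: "(z + 1)^2 * poly (map_poly complex_of_real Tp) z =
      (z + 1)^n * (of_real A * z^2 + of_real B * z + of_real C)" for z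
  proof -
    have "(z + 1)^2 * poly (map_poly complex_of_real Tp) z =
      (z + 1)^n * (of_nat n * of_nat (n - 1) * z^2 + of_real c * of_nat n * z * (z + 1) + of_real d * (z + 1)^2)"
      unfolding Tpc by (rule poly_Dform_pow)
    also have "of_nat n * of_nat (n - 1) * z^2 + of_real c * of_nat n * z * (z + 1) + of_real d * (z + 1)^2
        = of_real A * z^2 + of_real B * z + of_real C"
      by (simp add: A_def B_def C_def m_def n_def algebra_simps power2_eq_square)
    finally show ?thesis .
  qed
  have disc: "4 * A * C - B^2 = m * (m * e - 4 * d)"
    by (simp add: A_def B_def C_def e_def power2_eq_square algebra_simps)
  have dpos: "4 * A * C - B^2 > 0" unfolding disc using me m2 by simp
  have Apos: "A > 0"
  proof (rule ccontr)
    assume "\<not> A > 0"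
    hence "4 * A * C \<le> 0" using d by (simp add: C_def mult_nonpos_nonneg)
    thus False using dpos by (smt (verit) zero_le_power2)
  qed
  define D where "D = sqrt (4 * A * C - B^2)"
  have D: "D > 0" "D^2 = 4 * A * C - B^2" using dpos by (simp_all add: D_def)
  define z0 where "z0 = (of_real (-B) + \<i> * of_real D) / of_real (2 * A)"
  have lin: "of_real (2*A) * z0 + of_real B = \<i> * of_real D"
    using Apos by (simp add: z0_def)
  have "of_real (4*A) * (of_real A * z0^2 + of_real B * z0 + of_real C)
      = (of_real (2*A) * z0 + of_real B)^2 + of_real (4 * A * C - B^2)"
    by (simp add: algebra_simps power2_eq_square)
  also have "\<dots> = 0" unfolding lin D(2)[symmetric]
    by (simp add: power_mult_distrib of_real_power)
  finally have E0: "of_real A * z0^2 + of_real B * z0 + of_real C = 0" using Apos by simp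
  have imz0: "Im z0 \<noteq> 0" using Apos D by (simp add: z0_def)
  have "z0 + 1 \<noteq> 0"
  proof
    assume "z0 + 1 = 0" hence "Im (z0 + 1) = 0" by simp
    thus False using imz0 by simp
  qed
  hence root: "poly (map_poly complex_of_real Tp) z0 = 0" using Eq[of z0] E0 by simp
  have "poly (map_poly complex_of_real Tp) 0 = of_real C" using Eq[of 0] by simp
  hence "Tp \<noteq> 0" using d by (auto simp: C_def)
  hence "\<not> only_real_zeros Tp" using not_orz root imz0 by blast
  thus False using orz by (simp add: Tp_def)
qed

theorem proposition4p4:
  fixes \<alpha> \<beta> :: real
  shows "classical_multiplier_sequence (\<lambda>k. real k ^ 2 + \<alpha> * real k + \<beta>) \<longleftrightarrow>
           \<alpha> \<ge> -1 \<and> 0 \<le> \<beta> \<and> \<beta> \<le> (\<alpha> + 1) ^ 2 / 4"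
proof
  assume cms: "classical_multiplier_sequence (\<lambda>k. real k ^ 2 + \<alpha> * real k + \<beta>)"
  have g: "\<And>k. real k ^ 2 + \<alpha> * real k + \<beta> \<ge> 0"
    using nec_gamma_nonneg[OF cms] by simp
  have disc: "4 * \<beta> \<le> (\<alpha>+1)^2" using nec_disc[OF cms] by simp
  have b0: "0 \<le> \<beta>" using g[of 0] by simp
  have a: "\<alpha> \<ge> -1"
  proof (rule ccontr)
    assume "\<not> \<alpha> \<ge> -1"
    hence c: "\<alpha> + 1 < 0" by simp
    define k where "k = nat \<lfloor>1 - (\<alpha>+1)/2\<rfloor>"
    have rk: "real k = of_int \<lfloor>1 - (\<alpha>+1)/2\<rfloor>" using c unfolding k_def by simp
    have f1: "of_int \<lfloor>1 - (\<alpha>+1)/2\<rfloor> \<le> 1 - (\<alpha>+1)/2" by (rule of_int_floor_le)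
    have f2: "1 - (\<alpha>+1)/2 < of_int \<lfloor>1 - (\<alpha>+1)/2\<rfloor> + 1" by (rule real_of_int_floor_add_one_gt)
    have lo: "real k > - \<alpha>/2 - 1/2" using f2 unfolding rk by (simp add: field_simps)
    have hi: "real k \<le> - \<alpha>/2 + 1/2" using f1 unfolding rk by (simp add: field_simps)
    have sq: "(real k + \<alpha>/2)^2 \<le> 1/4"
    proof -
      have "\<bar>real k + \<alpha>/2\<bar> \<le> 1/2" using lo hi by linarith
      hence "\<bar>real k + \<alpha>/2\<bar>^2 \<le> (1/2)^2" by (intro power_mono) auto
      thus ?thesis by (simp add: power2_eq_square)
    qed
    have "real k ^ 2 + \<alpha> * real k + \<beta> = (real k + \<alpha>/2)^2 + \<beta> - \<alpha>^2/4"
      by (simp add: power2_eq_square algebra_simps)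
    also have "\<dots> \<le> 1/4 + (\<alpha>+1)^2/4 - \<alpha>^2/4" using sq disc by linarith
    also have "\<dots> = (\<alpha>+1)/2" by (simp add: power2_eq_square field_simps)
    also have "\<dots> < 0" using c by simp
    finally show False using g[of k] by simp
  qed
  show "\<alpha> \<ge> -1 \<and> 0 \<le> \<beta> \<and> \<beta> \<le> (\<alpha> + 1) ^ 2 / 4" using a b0 disc by simp
next
  assume "\<alpha> \<ge> -1 \<and> 0 \<le> \<beta> \<and> \<beta> \<le> (\<alpha> + 1) ^ 2 / 4"
  thus "classical_multiplier_sequence (\<lambda>k. real k ^ 2 + \<alpha> * real k + \<beta>)"
    using sufficiency by blast
qed

end
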